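(* There is a universal constant $C>0$ such that for any real numbers $\{c_{ij}: 1\le i,j\le 4\}$, $$\min_{S}\sum_{1\le i,j\le 4}c_{ij}S_{u_i}S_{v_j}\le -C\sum_{1\le i,j\le 4}|c_{ij}|,$$ where the minimum is over all assignments $S=(S_{u_1},\dots,S_{u_4},S_{v_1},\dots,S_{v_4})\in\{-1,1\}^8$. In particular, this holds for some $C>\frac{\ln(1+\sqrt{2})}{\pi}$.
   Context: Here $u_1,\dots,u_4$ and $v_1,\dots,v_4$ are the two sides of the complete bipartite graph $K_{4,4}$, with edge set $\{u_1,\dots,u_4\}\times\{v_1,\dots,v_4\}$ and coefficient $c_{ij}$ on edge $(u_i,v_j)$. *)

theory Defs
  imports Complex_Main "HOL-Library.FuncSet"
begin

definition spins4 :: "(nat \<Rightarrow> real) set" where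
  "spins4 = ({1..4} \<rightarrow>\<^sub>E {-1, 1})"

text \<open>Energy sum_{i,j} c_ij S_{u_i} S_{v_j}; x i = S_{u_i}, y j = S_{v_j}.\<close>
definition bip_energy :: "(nat \<Rightarrow> nat \<Rightarrow> real) \<Rightarrow> (nat \<Rightarrow> real) \<Rightarrow> (nat \<Rightarrow> real) \<Rightarrow> real" where
  "bip_energy c x y = (\<Sum>i=1..4. \<Sum>j=1..4. c i j * x i * y j)"

end

theory Submission
  imports Defs "HOL-Analysis.Complex_Transcendental"
begin

definition ab :: "real \<Rightarrow> real" where "ab x = \<bar>x\<bar>"

definition S4 :: "real \<Rightarrow> real \<Rightarrow> real \<Rightarrow> real \<Rightarrow> real" where
 "S4 a b c d = \<bar>a+b+c+d\<bar> + \<bar>a+b+c-d\<bar> + \<bar>a+b-c+d\<bar> + \<bar>a+b-c-d\<bar> +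
    \<bar>a-b+c+d\<bar> + \<bar>a-b+c-d\<bar> + \<bar>a-b-c+d\<bar> + \<bar>a-b-c-d\<bar> +
    \<bar>-a+b+c+d\<bar> + \<bar>-a+b+c-d\<bar> + \<bar>-a+b-c+d\<bar> + \<bar>-a+b-c-d\<bar> +
    \<bar>-a-b+c+d\<bar> + \<bar>-a-b+c-d\<bar> + \<bar>-a-b-c+d\<bar> + \<bar>-a-b-c-d\<bar>"
lemma S4_nonneg:
  fixes a b c d :: real
  assumes "a\<ge>0" "b\<ge>0" "c\<ge>0" "d\<ge>0"
  shows "6 * (a+b+c+d) \<le> S4 a b c d"
proof -
  note A = abs_ge_self[of "a+b+c+d"] abs_ge_self[of "a+b+c-d"] abs_ge_self[of "a+b-c+d"] 
   abs_ge_self[of "a-b+c+d"] abs_ge_self[of "-a+b+c+d"] 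
  note B = abs_ge_minus_self[of "a-b-c-d"] abs_ge_minus_self[of "-a+b-c-d"] abs_ge_minus_self[of "-a-b+c-d"] 
   abs_ge_minus_self[of "-a-b-c+d"] abs_ge_minus_self[of "-a-b-c-d"]
  note C = abs_ge_zero[of "a+b-c-d"] abs_ge_zero[of "a-b+c-d"] abs_ge_zero[of "a-b-c+d"]
   abs_ge_zero[of "-a+b+c-d"] abs_ge_zero[of "-a+b-c+d"] abs_ge_zero[of "-a-b+c+d"]
  show ?thesis unfolding S4_def using A[folded ab_def] B[folded ab_def] C[folded ab_def] assms unfolding ab_def[symmetric] by (smt (verit))
qed
lemma S4_fa: "S4 (-a) b c d = S4 a b c d" unfolding S4_def by simp
lemma S4_fb: "S4 a (-b) c d = S4 a b c d" unfolding S4_def by simp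
lemma S4_fc: "S4 a b (-c) d = S4 a b c d" unfolding S4_def by simp
lemma S4_fd: "S4 a b c (-d) = S4 a b c d" unfolding S4_def by simp
lemma S4_abs: "S4 (\<bar>a\<bar>) (\<bar>b\<bar>) (\<bar>c\<bar>) (\<bar>d\<bar>) = S4 a b c d"
  by (cases "a \<ge> 0"; cases "b \<ge> 0"; cases "c \<ge> 0"; cases "d \<ge> 0")
     (simp_all add: S4_fa S4_fb S4_fc S4_fd)
lemma khin: "6 * (\<bar>a\<bar>+\<bar>b\<bar>+\<bar>c\<bar>+\<bar>d\<bar>) \<le> S4 a b c d"
  using S4_nonneg[of "\<bar>a\<bar>" "\<bar>b\<bar>" "\<bar>c\<bar>" "\<bar>d\<bar>"] S4_abs by simp

definition S4' :: "real \<Rightarrow> real \<Rightarrow> real \<Rightarrow> real \<Rightarrow> real" where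
 "S4' a b c d = \<bar>a * (1) + b * (1) + c * (1) + d * (1)\<bar> +
   \<bar>a * (1) + b * (1) + c * (1) + d * (-1)\<bar> +
   \<bar>a * (1) + b * (1) + c * (-1) + d * (1)\<bar> +
   \<bar>a * (1) + b * (1) + c * (-1) + d * (-1)\<bar> +
   \<bar>a * (1) + b * (-1) + c * (1) + d * (1)\<bar> +
   \<bar>a * (1) + b * (-1) + c * (1) + d * (-1)\<bar> +
   \<bar>a * (1) + b * (-1) + c * (-1) + d * (1)\<bar> +
   \<bar>a * (1) + b * (-1) + c * (-1) + d * (-1)\<bar> +
   \<bar>a * (-1) + b * (1) + c * (1) + d * (1)\<bar> +
   \<bar>a * (-1) + b * (1) + c * (1) + d * (-1)\<bar> +
   \<bar>a * (-1) + b * (1) + c * (-1) + d * (1)\<bar> +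
   \<bar>a * (-1) + b * (1) + c * (-1) + d * (-1)\<bar> +
   \<bar>a * (-1) + b * (-1) + c * (1) + d * (1)\<bar> +
   \<bar>a * (-1) + b * (-1) + c * (1) + d * (-1)\<bar> +
   \<bar>a * (-1) + b * (-1) + c * (-1) + d * (1)\<bar> +
   \<bar>a * (-1) + b * (-1) + c * (-1) + d * (-1)\<bar>"

lemma S4'_eq: "S4' a b c d = S4 a b c d"
  unfolding S4'_def S4_def by simp

lemma sum4: "(\<Sum>i=(1::nat)..4. f i) = f 1 + f 2 + f 3 + f 4"
proof -
  have "{1..(4::nat)} = {1,2,3,4}" by auto
  then show ?thesis by (simp add: ac_simps)
qed

lemma spins4_fin: "finite spins4"
  unfolding spins4_def by (rule finite_PiE) auto

lemma key:
  assumes y: "y \<in> spins4"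
  shows "Min ((\<lambda>(x, y). bip_energy c x y) ` (spins4 \<times> spins4))
     \<le> - (\<Sum>i=1..4. \<bar>\<Sum>j=1..4. c i j * y j\<bar>)"
proof -
  define x where "x = restrict (\<lambda>i. if (\<Sum>j=1..4. c i j * y j) \<ge> 0 then -1 else (1::real)) {1..4}"
  have x: "x \<in> spins4" unfolding x_def spins4_def by auto
  have "bip_energy c x y = (\<Sum>i=1..4. x i * (\<Sum>j=1..4. c i j * y j))"
    unfolding bip_energy_def by (simp add: sum_distrib_left mult.commute mult.left_commute)
  also have "\<dots> = (\<Sum>i=1..4. - \<bar>\<Sum>j=1..4. c i j * y j\<bar>)"
    by (rule sum.cong) (auto simp: x_def)
  also have "\<dots> = - (\<Sum>i=1..4. \<bar>\<Sum>j=1..4. c i j * y j\<bar>)" by (simp add: sum_negf)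
  finally have e: "bip_energy c x y = - (\<Sum>i=1..4. \<bar>\<Sum>j=1..4. c i j * y j\<bar>)" .
  have "bip_energy c x y \<in> (\<lambda>(x, y). bip_energy c x y) ` (spins4 \<times> spins4)"
    using x y by force
  then show ?thesis using e spins4_fin by (metis Min_le finite_SigmaI finite_imageI)
qed

lemma inst:
  assumes "e1 \<in> {-1,1}" "e2 \<in> {-1,1}" "e3 \<in> {-1,1}" "e4 \<in> {-1,1}"
  shows "Min ((\<lambda>(x, y). bip_energy c x y) ` (spins4 \<times> spins4))
     \<le> - (\<bar>c 1 1 * e1 + c 1 2 * e2 + c 1 3 * e3 + c 1 4 * e4\<bar> +
           \<bar>c 2 1 * e1 + c 2 2 * e2 + c 2 3 * e3 + c 2 4 * e4\<bar> +
           \<bar>c 3 1 * e1 + c 3 2 * e2 + c 3 3 * e3 + c 3 4 * e4\<bar> +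
           \<bar>c 4 1 * e1 + c 4 2 * e2 + c 4 3 * e3 + c 4 4 * e4\<bar>)"
proof -
  define y where "y = restrict (\<lambda>j. if j = 1 then e1 else if j = 2 then e2 else if j = 3 then e3 else e4) {1..(4::nat)}"
  have "y \<in> spins4" unfolding y_def spins4_def using assms by auto
  note k = key[OF this, of c]
  have s: "(\<Sum>j=1..4. c i j * y j) = c i 1 * e1 + c i 2 * e2 + c i 3 * e3 + c i 4 * e4" for i
    unfolding sum4 y_def by simp
  show ?thesis using k unfolding s sum4 .
qed

lemma const: "ln (1 + sqrt 2) / pi < 3/8"
proof -
  have "sqrt 2 < 3/2" by (rule real_less_lsqrt) (auto simp: power2_eq_square)
  moreover have "1 + 1 + 1^2/2 \<le> exp (1::real)" using exp_lower_Taylor_quadratic[of 1] by simp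
  ultimately have "1 + sqrt 2 < exp 1" by simp
  hence "ln (1 + sqrt 2) < 1"
    by (metis add_pos_nonneg ln_exp ln_less_cancel_iff real_sqrt_ge_zero zero_le_numeral zero_less_one exp_gt_zero)
  moreover have "pi > 3" using pi_approx(1) by simp
  ultimately show ?thesis by (simp add: divide_less_eq)
qed

lemma fin: "16 * (M::real) \<le> - T \<Longrightarrow> 6 * S \<le> T \<Longrightarrow> M \<le> - (3/8) * S"
  by linarith

lemma lin:
  fixes M :: real
  assumes "M \<le> - (t1_1 + t2_1 + t3_1 + t4_1)"
    and "M \<le> - (t1_2 + t2_2 + t3_2 + t4_2)"
    and "M \<le> - (t1_3 + t2_3 + t3_3 + t4_3)"
    and "M \<le> - (t1_4 + t2_4 + t3_4 + t4_4)"
    and "M \<le> - (t1_5 + t2_5 + t3_5 + t4_5)"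
    and "M \<le> - (t1_6 + t2_6 + t3_6 + t4_6)"
    and "M \<le> - (t1_7 + t2_7 + t3_7 + t4_7)"
    and "M \<le> - (t1_8 + t2_8 + t3_8 + t4_8)"
    and "M \<le> - (t1_9 + t2_9 + t3_9 + t4_9)"
    and "M \<le> - (t1_10 + t2_10 + t3_10 + t4_10)"
    and "M \<le> - (t1_11 + t2_11 + t3_11 + t4_11)"
    and "M \<le> - (t1_12 + t2_12 + t3_12 + t4_12)"
    and "M \<le> - (t1_13 + t2_13 + t3_13 + t4_13)"
    and "M \<le> - (t1_14 + t2_14 + t3_14 + t4_14)"
    and "M \<le> - (t1_15 + t2_15 + t3_15 + t4_15)"
    and "M \<le> - (t1_16 + t2_16 + t3_16 + t4_16)"
    and "6 * (s1_1 + s1_2 + s1_3 + s1_4) \<le> t1_1 + t1_2 + t1_3 + t1_4 + t1_5 + t1_6 + t1_7 + t1_8 + t1_9 + t1_10 + t1_11 + t1_12 + t1_13 + t1_14 + t1_15 + t1_16"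
    and "6 * (s2_1 + s2_2 + s2_3 + s2_4) \<le> t2_1 + t2_2 + t2_3 + t2_4 + t2_5 + t2_6 + t2_7 + t2_8 + t2_9 + t2_10 + t2_11 + t2_12 + t2_13 + t2_14 + t2_15 + t2_16"
    and "6 * (s3_1 + s3_2 + s3_3 + s3_4) \<le> t3_1 + t3_2 + t3_3 + t3_4 + t3_5 + t3_6 + t3_7 + t3_8 + t3_9 + t3_10 + t3_11 + t3_12 + t3_13 + t3_14 + t3_15 + t3_16"
    and "6 * (s4_1 + s4_2 + s4_3 + s4_4) \<le> t4_1 + t4_2 + t4_3 + t4_4 + t4_5 + t4_6 + t4_7 + t4_8 + t4_9 + t4_10 + t4_11 + t4_12 + t4_13 + t4_14 + t4_15 + t4_16"
  shows "M \<le> - (3/8) * (s1_1 + s1_2 + s1_3 + s1_4 + (s2_1 + s2_2 + s2_3 + s2_4) + (s3_1 + s3_2 + s3_3 + s3_4) + (s4_1 + s4_2 + s4_3 + s4_4))"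
proof -
  have "16 * M \<le> - (t1_1 + t2_1 + t3_1 + t4_1 + t1_2 + t2_2 + t3_2 + t4_2 + t1_3 + t2_3 + t3_3 + t4_3 + t1_4 + t2_4 + t3_4 + t4_4 + t1_5 + t2_5 + t3_5 + t4_5 + t1_6 + t2_6 + t3_6 + t4_6 + t1_7 + t2_7 + t3_7 + t4_7 + t1_8 + t2_8 + t3_8 + t4_8 + t1_9 + t2_9 + t3_9 + t4_9 + t1_10 + t2_10 + t3_10 + t4_10 + t1_11 + t2_11 + t3_11 + t4_11 + t1_12 + t2_12 + t3_12 + t4_12 + t1_13 + t2_13 + t3_13 + t4_13 + t1_14 + t2_14 + t3_14 + t4_14 + t1_15 + t2_15 + t3_15 + t4_15 + t1_16 + t2_16 + t3_16 + t4_16)"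
    using assms(1-16) by linarith
  moreover have "6 * (s1_1 + s1_2 + s1_3 + s1_4 + (s2_1 + s2_2 + s2_3 + s2_4) + (s3_1 + s3_2 + s3_3 + s3_4) + (s4_1 + s4_2 + s4_3 + s4_4)) \<le> t1_1 + t2_1 + t3_1 + t4_1 + t1_2 + t2_2 + t3_2 + t4_2 + t1_3 + t2_3 + t3_3 + t4_3 + t1_4 + t2_4 + t3_4 + t4_4 + t1_5 + t2_5 + t3_5 + t4_5 + t1_6 + t2_6 + t3_6 + t4_6 + t1_7 + t2_7 + t3_7 + t4_7 + t1_8 + t2_8 + t3_8 + t4_8 + t1_9 + t2_9 + t3_9 + t4_9 + t1_10 + t2_10 + t3_10 + t4_10 + t1_11 + t2_11 + t3_11 + t4_11 + t1_12 + t2_12 + t3_12 + t4_12 + t1_13 + t2_13 + t3_13 + t4_13 + t1_14 + t2_14 + t3_14 + t4_14 + t1_15 + t2_15 + t3_15 + t4_15 + t1_16 + t2_16 + t3_16 + t4_16"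
    using assms(17-20) by (smt (verit))
  ultimately show ?thesis by (rule fin)
qed

theorem lemma2:
  shows "\<exists>C::real. C > 0 \<and> C > ln (1 + sqrt 2) / pi \<and>
    (\<forall>c :: nat \<Rightarrow> nat \<Rightarrow> real.
       Min ((\<lambda>(x, y). bip_energy c x y) ` (spins4 \<times> spins4))
         \<le> - C * (\<Sum>i=1..4. \<Sum>j=1..4. \<bar>c i j\<bar>))"
proof (intro exI[of _ "3/8"] conjI allI)
  fix c :: "nat \<Rightarrow> nat \<Rightarrow> real"
  show "ln (1 + sqrt 2) / pi < 3/8" by (rule const)
  show "Min ((\<lambda>(x, y). bip_energy c x y) ` (spins4 \<times> spins4))
         \<le> - (3/8) * (\<Sum>i=1..4. \<Sum>j=1..4. \<bar>c i j\<bar>)"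
  proof -
    have m: "(1::real) \<in> {-1,1}" "(-1::real) \<in> {-1,1}" by auto
    note I = inst[OF m(1) m(1) m(1) m(1), of c] inst[OF m(1) m(1) m(1) m(2), of c] inst[OF m(1) m(1) m(2) m(1), of c] inst[OF m(1) m(1) m(2) m(2), of c] inst[OF m(1) m(2) m(1) m(1), of c] inst[OF m(1) m(2) m(1) m(2), of c] inst[OF m(1) m(2) m(2) m(1), of c] inst[OF m(1) m(2) m(2) m(2), of c] inst[OF m(2) m(1) m(1) m(1), of c] inst[OF m(2) m(1) m(1) m(2), of c] inst[OF m(2) m(1) m(2) m(1), of c] inst[OF m(2) m(1) m(2) m(2), of c] inst[OF m(2) m(2) m(1) m(1), of c] inst[OF m(2) m(2) m(1) m(2), of c] inst[OF m(2) m(2) m(2) m(1), of c] inst[OF m(2) m(2) m(2) m(2), of c]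
    note K = khin[of "c 1 1" "c 1 2" "c 1 3" "c 1 4", folded S4'_eq, unfolded S4'_def]
      khin[of "c 2 1" "c 2 2" "c 2 3" "c 2 4", folded S4'_eq, unfolded S4'_def]
      khin[of "c 3 1" "c 3 2" "c 3 3" "c 3 4", folded S4'_eq, unfolded S4'_def]
      khin[of "c 4 1" "c 4 2" "c 4 3" "c 4 4", folded S4'_eq, unfolded S4'_def]
    show ?thesis unfolding sum4 using I[folded ab_def] K[folded ab_def] unfolding ab_def[symmetric]
      by (rule lin)
  qed
qed (simp)

end
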